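(* Let $M$ be an entrywise nonnegative $m\times n$ real matrix and let $M=AW$ be a stable nonnegative matrix factorization with $A\in\mathbb{R}_{\ge0}^{m\times r}$, $W\in\mathbb{R}_{\ge0}^{r\times n}$. Let $s=\mathrm{rank}(A)$, let $U\subseteq[m]$ be a set of $s$ linearly independent rows of $A$, and let $B_1,\dots,B_p$ be the ensemble of $A$ at $U$. Then for every $k\in[p]$ and every column index $i$, $AB_kM_i^U=M_i$.
   Context: Notation: $M_i$ is the $i$-th column, $M^j$ the $j$-th row; $A_S$ denotes columns in $S$, $A^U$ rows in $U$, $M_i^U$ the entries of $M_i$ in rows $U$. $\mathrm{aff}(A)=\{\sum_i\alpha_iA_i:\alpha_i\ge0\}$. A subset $S\subseteq[r]$ of columns of $A$ is admissible for $v\in\mathbb{R}^m$ if $v\in\mathrm{aff}(A_S)$; a subset $T\subseteq[r]$ of rows of $W$ is admissible for a row vector $u$ if $u$ is a nonnegative combination of the rows of $W^T$. Lexicographic ordering on subsets of $[r]$: if $|S|<|T|$ then $S$ precedes $T$; equal-size subsets compared by standard lexicographic order. $M=AW$ is stable if, with $S_i$ the lexicographically first subset of columns of $A$ admissible for $M_i$ and $T_j$ the lexicographically first subset of rows of $W$ admissible for $M^j$, each $W_i$ is supported in $S_i$ and each row $A^j$ is supported in $T_j$. Ensemble: let $S_1,\dots,S_p$ be all sets of $s$ linearly independent columns of $A$, in lexicographic order; $B_k$ is the $r\times s$ matrix that is zero on rows outside $S_k$ and whose restriction to rows $S_k$ equals $(A^U_{S_k})^{-1}$. *)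

theory Defs
  imports Complex_Main
begin

text \<open>Matrices are functions nat \<Rightarrow> nat \<Rightarrow> real; an m x r matrix A has entries A l j
  for l < m, j < r (0-based indices, [r] = {0..<r}).\<close>

type_synonym rmat = "nat \<Rightarrow> nat \<Rightarrow> real"

definition nonneg_mat :: "rmat \<Rightarrow> nat \<Rightarrow> nat \<Rightarrow> bool" where
  "nonneg_mat A m r \<longleftrightarrow> (\<forall>l<m. \<forall>j<r. A l j \<ge> 0)"

definition mat_mult :: "rmat \<Rightarrow> nat \<Rightarrow> rmat \<Rightarrow> rmat" where
  "mat_mult A r W = (\<lambda>l i. \<Sum>j<r. A l j * W j i)"

definition cols_indep :: "rmat \<Rightarrow> nat \<Rightarrow> nat set \<Rightarrow> bool" where
  "cols_indep A m S \<longleftrightarrow>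
     (\<forall>c. (\<forall>l<m. (\<Sum>j\<in>S. c j * A l j) = 0) \<longrightarrow> (\<forall>j\<in>S. c j = 0))"

definition rows_indep :: "rmat \<Rightarrow> nat \<Rightarrow> nat set \<Rightarrow> bool" where
  "rows_indep A r U \<longleftrightarrow>
     (\<forall>c. (\<forall>j<r. (\<Sum>u\<in>U. c u * A u j) = 0) \<longrightarrow> (\<forall>u\<in>U. c u = 0))"

definition mat_rank :: "rmat \<Rightarrow> nat \<Rightarrow> nat \<Rightarrow> nat" where
  "mat_rank A m r = Max {card S | S. S \<subseteq> {..<r} \<and> cols_indep A m S}"

definition lex_less :: "nat set \<Rightarrow> nat set \<Rightarrow> bool" where
  "lex_less S T \<longleftrightarrow> card S < card T \<or>
     (card S = card T \<and>
      (sorted_list_of_set S, sorted_list_of_set T) \<in> lexord {(a, b). a < b})"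

definition lex_first :: "nat \<Rightarrow> (nat set \<Rightarrow> bool) \<Rightarrow> nat set \<Rightarrow> bool" where
  "lex_first r P S \<longleftrightarrow> S \<subseteq> {..<r} \<and> P S \<and>
     (\<forall>T. T \<subseteq> {..<r} \<and> P T \<longrightarrow> \<not> lex_less T S)"

text \<open>S admissible for column vector v: v \<in> aff(A_S) (nonnegative combinations).\<close>
definition col_admissible :: "rmat \<Rightarrow> nat \<Rightarrow> (nat \<Rightarrow> real) \<Rightarrow> nat set \<Rightarrow> bool" where
  "col_admissible A m v S \<longleftrightarrow>
     (\<exists>\<alpha>. (\<forall>j\<in>S. \<alpha> j \<ge> 0) \<and> (\<forall>l<m. v l = (\<Sum>j\<in>S. \<alpha> j * A l j)))"

definition row_admissible :: "rmat \<Rightarrow> nat \<Rightarrow> (nat \<Rightarrow> real) \<Rightarrow> nat set \<Rightarrow> bool" where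
  "row_admissible W n u T \<longleftrightarrow>
     (\<exists>\<beta>. (\<forall>j\<in>T. \<beta> j \<ge> 0) \<and> (\<forall>i<n. u i = (\<Sum>j\<in>T. \<beta> j * W j i)))"

definition stable_fact :: "rmat \<Rightarrow> rmat \<Rightarrow> rmat \<Rightarrow> nat \<Rightarrow> nat \<Rightarrow> nat \<Rightarrow> bool" where
  "stable_fact M A W m n r \<longleftrightarrow>
     (\<forall>i<n. \<forall>S. lex_first r (col_admissible A m (\<lambda>l. M l i)) S \<longrightarrow>
        (\<forall>j<r. j \<notin> S \<longrightarrow> W j i = 0)) \<and>
     (\<forall>l<m. \<forall>T. lex_first r (row_admissible W n (\<lambda>i. M l i)) T \<longrightarrow>
        (\<forall>j<r. j \<notin> T \<longrightarrow> A l j = 0))"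

definition sub_inverse :: "rmat \<Rightarrow> nat set \<Rightarrow> nat set \<Rightarrow> rmat" where
  "sub_inverse A U S = (THE C.
     (\<forall>u\<in>U. \<forall>u'\<in>U. (\<Sum>j\<in>S. A u j * C j u') = (if u = u' then 1 else 0)) \<and>
     (\<forall>j\<in>S. \<forall>j'\<in>S. (\<Sum>u\<in>U. C j u * A u j') = (if j = j' then 1 else 0)) \<and>
     (\<forall>j u. j \<notin> S \<or> u \<notin> U \<longrightarrow> C j u = 0))"

text \<open>Ensemble member B_k for S_k = S: the r x s matrix zero on rows outside S whose
  restriction to rows S is (A^U_S)^{-1}; its columns are indexed by U.\<close>
definition ensemble_B :: "rmat \<Rightarrow> nat set \<Rightarrow> nat set \<Rightarrow> rmat" where
  "ensemble_B A U S = sub_inverse A U S"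

definition ensemble_sets :: "rmat \<Rightarrow> nat \<Rightarrow> nat \<Rightarrow> nat \<Rightarrow> nat set set" where
  "ensemble_sets A m r s = {S. S \<subseteq> {..<r} \<and> card S = s \<and> cols_indep A m S}"

end

theory Submission imports Defs "HOL-Library.Function_Algebras" begin

interpretation fvs: vector_space "(\<lambda>(c::real) (f::nat\<Rightarrow>real) x. c * f x)"
  by unfold_locales (auto simp: fun_eq_iff algebra_simps)

lemma sum_fun_apply': "(\<Sum>i\<in>I. (f i :: nat \<Rightarrow> real)) x = (\<Sum>i\<in>I. f i x)"
  by (induction I rule: infinite_finite_induct) auto

lemma fam_bound:
  fixes v :: "'i \<Rightarrow> nat \<Rightarrow> real" and w :: "'k \<Rightarrow> nat \<Rightarrow> real"
  assumes fI: "finite I" and fK: "finite K"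
    and ind: "\<forall>c. (\<forall>x\<in>X. (\<Sum>i\<in>I. c i * v i x) = 0) \<longrightarrow> (\<forall>i\<in>I. c i = 0)"
    and sp: "\<forall>i\<in>I. \<exists>\<beta>. \<forall>x\<in>X. v i x = (\<Sum>k\<in>K. \<beta> k * w k x)"
  shows "card I \<le> card K"
proof -
  define v' where "v' i = (\<lambda>x. if x \<in> X then v i x else 0)" for i
  define w' where "w' k = (\<lambda>x. if x \<in> X then w k x else 0)" for k
  have inj: "inj_on v' I"
  proof (rule inj_onI, rule ccontr)
    fix i j assume ij: "i \<in> I" "j \<in> I" "v' i = v' j" "i \<noteq> j"
    define c where "c t = (if t = i then 1 else if t = j then -1 else (0::real))" for t
    have "\<forall>x\<in>X. (\<Sum>t\<in>I. c t * v t x) = 0"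
    proof
      fix x assume x: "x \<in> X"
      have "v i x = v j x" using ij(3) x unfolding v'_def by (metis)
      have "(\<Sum>t\<in>I. c t * v t x) = (\<Sum>t\<in>I. (if t = i then v i x else 0) - (if t = j then v j x else 0))"
        by (rule sum.cong) (auto simp: c_def ij)
      also have "\<dots> = 0" using ij fI \<open>v i x = v j x\<close> by (simp add: sum_subtractf)
      finally show "(\<Sum>t\<in>I. c t * v t x) = 0" .
    qed
    with ind ij show False unfolding c_def by force
  qed
  have indep: "fvs.independent (v' ` I)"
  proof
    assume "fvs.dependent (v' ` I)"
    then obtain u where u: "\<exists>z\<in>v' ` I. u z \<noteq> 0" "(\<Sum>z\<in>v' ` I. (\<lambda>x. u z * z x)) = 0"
      using fvs.dependent_finite[of "v' ` I"] fI by auto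
    have "(\<Sum>i\<in>I. (\<lambda>x. u (v' i) * v' i x)) = 0"
      using u(2) sum.reindex[OF inj, of "\<lambda>z. (\<lambda>x. u z * z x)"] by simp
    hence h: "\<forall>x. (\<Sum>i\<in>I. u (v' i) * v' i x) = 0"
      by (auto simp: fun_eq_iff sum_fun_apply')
    have "\<forall>x\<in>X. (\<Sum>i\<in>I. u (v' i) * v i x) = 0"
    proof
      fix x assume "x \<in> X"
      hence "\<forall>i. v' i x = v i x" by (simp add: v'_def)
      thus "(\<Sum>i\<in>I. u (v' i) * v i x) = 0" using h[rule_format, of x] by simp
    qed
    with ind[rule_format, of "\<lambda>i. u (v' i)"] have "\<forall>i\<in>I. u (v' i) = 0" by blast
    with u(1) show False by auto
  qed
  have "v' ` I \<subseteq> fvs.span (w' ` K)"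
  proof
    fix z assume "z \<in> v' ` I"
    then obtain i where i: "i \<in> I" "z = v' i" by auto
    obtain \<beta> where b: "\<forall>x\<in>X. v i x = (\<Sum>k\<in>K. \<beta> k * w k x)" using sp i by blast
    have "z = (\<Sum>k\<in>K. (\<lambda>x. \<beta> k * w' k x))"
      using b i by (auto simp: fun_eq_iff sum_fun_apply' v'_def w'_def)
    also have "\<dots> \<in> fvs.span (w' ` K)"
      by (intro fvs.span_sum fvs.span_scale fvs.span_base) auto
    finally show "z \<in> fvs.span (w' ` K)" .
  qed
  from fvs.independent_span_bound[OF _ indep this] fK
  have "card (v' ` I) \<le> card (w' ` K)" by auto
  also have "\<dots> \<le> card K" using fK by (rule card_image_le)
  finally show ?thesis using card_image[OF inj] by simp
qed

context
  fixes A :: rmat and m r s :: nat and U S :: "nat set"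
  assumes rk: "s = mat_rank A m r"
    and U: "U \<subseteq> {..<m}" "card U = s" "rows_indep A r U"
    and S: "S \<subseteq> {..<r}" "card S = s" "cols_indep A m S"
begin

lemma finS: "finite S" using S(1) finite_subset by blast
lemma finU: "finite U" using U(1) finite_subset by blast

lemma col_span: assumes j: "j < r" shows "\<exists>\<alpha>. \<forall>l<m. A l j = (\<Sum>k\<in>S. \<alpha> k * A l k)"
proof (cases "j \<in> S")
  case True
  show ?thesis
  proof (rule exI[of _ "\<lambda>k. if k = j then 1 else 0"], intro allI impI)
    fix l
    have "(\<Sum>k\<in>S. (if k = j then 1 else 0) * A l k) = (\<Sum>k\<in>S. if k = j then A l k else 0)"
      by (rule sum.cong) auto
    also have "\<dots> = A l j" using True finS by simp
    finally show "A l j = (\<Sum>k\<in>S. (if k = j then 1 else 0) * A l k)" by simp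
  qed
next
  case False
  show ?thesis
  proof (rule ccontr)
    assume nex: "\<not> ?thesis"
    have "cols_indep A m (insert j S)"
      unfolding cols_indep_def
    proof (intro allI impI)
      fix c assume h: "\<forall>l<m. (\<Sum>k\<in>insert j S. c k * A l k) = 0"
      have h2: "\<forall>l<m. c j * A l j + (\<Sum>k\<in>S. c k * A l k) = 0"
        using h False finS by simp
      have cj: "c j = 0"
      proof (rule ccontr)
        assume "c j \<noteq> 0"
        have "\<forall>l<m. A l j = (\<Sum>k\<in>S. (- c k / c j) * A l k)"
        proof (intro allI impI)
          fix l assume "l < m"
          have "c j * A l j + (\<Sum>k\<in>S. c k * A l k) = 0" using h2 \<open>l < m\<close> by blast
          hence "c j * A l j = - (\<Sum>k\<in>S. c k * A l k)" by linarith
          hence "A l j = - (\<Sum>k\<in>S. c k * A l k) / c j" using \<open>c j \<noteq> 0\<close> by (simp add: field_simps)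
          also have "\<dots> = (\<Sum>k\<in>S. (- c k / c j) * A l k)"
            by (simp add: sum_divide_distrib sum_negf)
          finally show "A l j = (\<Sum>k\<in>S. (- c k / c j) * A l k)" .
        qed
        thus False using nex by (rule_tac notE[OF nex], rule_tac exI)
      qed
      hence "\<forall>l<m. (\<Sum>k\<in>S. c k * A l k) = 0" using h2 by auto
      hence "\<forall>k\<in>S. c k = 0" using S(3) unfolding cols_indep_def by (rule_tac mp[OF spec[of _ c]])
      with cj show "\<forall>k\<in>insert j S. c k = 0" by simp
    qed
    moreover have "insert j S \<subseteq> {..<r}" using S(1) j by auto
    ultimately have "card (insert j S) \<in> {card S |S. S \<subseteq> {..<r} \<and> cols_indep A m S}" by blast
    moreover have "finite {card S |S. S \<subseteq> {..<r} \<and> cols_indep A m S}"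
      by (rule finite_subset[of _ "card ` Pow {..<r}"]) auto
    ultimately have "card (insert j S) \<le> s" unfolding rk mat_rank_def by (simp only: Max_ge)
    thus False using False finS S(2) by simp
  qed
qed

lemma col_span_all: "\<exists>\<alpha>. \<forall>j<r. \<forall>l<m. A l j = (\<Sum>k\<in>S. \<alpha> j k * A l k)"
proof -
  have "\<forall>j. \<exists>\<alpha>. j < r \<longrightarrow> (\<forall>l<m. A l j = (\<Sum>k\<in>S. \<alpha> k * A l k))" using col_span by blast
  from choice[OF this] show ?thesis by blast
qed


lemma row_span: assumes l: "l < m" shows "\<exists>lam. \<forall>j<r. A l j = (\<Sum>u\<in>U. lam u * A u j)"
proof (cases "l \<in> U")
  case True
  show ?thesis
  proof (rule exI[of _ "\<lambda>k. if k = l then 1 else 0"], intro allI impI)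
    fix j
    have "(\<Sum>k\<in>U. (if k = l then 1 else 0) * A k j) = (\<Sum>k\<in>U. if k = l then A k j else 0)"
      by (rule sum.cong) auto
    also have "\<dots> = A l j" using True finU by simp
    finally show "A l j = (\<Sum>k\<in>U. (if k = l then 1 else 0) * A k j)" by simp
  qed
next
  case False
  show ?thesis
  proof (rule ccontr)
    assume nex: "\<not> ?thesis"
    have ind: "\<forall>c. (\<forall>j\<in>{..<r}. (\<Sum>u\<in>insert l U. c u * A u j) = 0) \<longrightarrow> (\<forall>u\<in>insert l U. c u = 0)"
    proof (intro allI impI)
      fix c assume h: "\<forall>j\<in>{..<r}. (\<Sum>k\<in>insert l U. c k * A k j) = 0"
      have h2: "\<forall>j<r. c l * A l j + (\<Sum>k\<in>U. c k * A k j) = 0"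
        using h False finU by simp
      have cj: "c l = 0"
      proof (rule ccontr)
        assume "c l \<noteq> 0"
        have "\<forall>j<r. A l j = (\<Sum>k\<in>U. (- c k / c l) * A k j)"
        proof (intro allI impI)
          fix j assume "j < r"
          have "c l * A l j + (\<Sum>k\<in>U. c k * A k j) = 0" using h2 \<open>j < r\<close> by blast
          hence "c l * A l j = - (\<Sum>k\<in>U. c k * A k j)" by linarith
          hence "A l j = - (\<Sum>k\<in>U. c k * A k j) / c l" using \<open>c l \<noteq> 0\<close> by (simp add: field_simps)
          also have "\<dots> = (\<Sum>k\<in>U. (- c k / c l) * A k j)"
            by (simp add: sum_divide_distrib sum_negf)
          finally show "A l j = (\<Sum>k\<in>U. (- c k / c l) * A k j)" .
        qed
        thus False using nex by (rule_tac notE[OF nex], rule_tac exI)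
      qed
      hence "\<forall>j<r. (\<Sum>k\<in>U. c k * A k j) = 0" using h2 by auto
      hence "\<forall>k\<in>U. c k = 0" using U(3) unfolding rows_indep_def by (rule_tac mp[OF spec[of _ c]])
      with cj show "\<forall>k\<in>insert l U. c k = 0" by simp
    qed
    obtain \<alpha> where al: "\<forall>j<r. \<forall>l<m. A l j = (\<Sum>k\<in>S. \<alpha> j k * A l k)" using col_span_all by blast
    have sp: "\<forall>i\<in>insert l U. \<exists>\<beta>. \<forall>x\<in>{..<r}. A i x = (\<Sum>k\<in>S. \<beta> k * (\<lambda>k x. \<alpha> x k) k x)"
    proof
      fix i assume "i \<in> insert l U"
      hence "i < m" using l U(1) by auto
      thus "\<exists>\<beta>. \<forall>x\<in>{..<r}. A i x = (\<Sum>k\<in>S. \<beta> k * (\<lambda>k x. \<alpha> x k) k x)"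
        using al by (intro exI[of _ "\<lambda>k. A i k"]) (auto simp: mult.commute)
    qed
    have "card (insert l U) \<le> card S"
      by (rule fam_bound[OF _ finS ind sp]) (simp add: finU)
    thus False using False finU U(2) S(2) by simp
  qed
qed

lemma inj_S: "\<forall>c. (\<forall>u\<in>U. (\<Sum>j\<in>S. c j * A u j) = 0) \<longrightarrow> (\<forall>j\<in>S. c j = 0)"
proof (intro allI impI)
  fix c assume h: "\<forall>u\<in>U. (\<Sum>j\<in>S. c j * A u j) = 0"
  have "\<forall>l<m. (\<Sum>j\<in>S. c j * A l j) = 0"
  proof (intro allI impI)
    fix l assume "l < m"
    then obtain lam where la: "\<forall>j<r. A l j = (\<Sum>u\<in>U. lam u * A u j)" using row_span by blast
    have "(\<Sum>j\<in>S. c j * A l j) = (\<Sum>j\<in>S. c j * (\<Sum>u\<in>U. lam u * A u j))"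
      using la S(1) by (intro sum.cong) auto
    also have "\<dots> = (\<Sum>u\<in>U. lam u * (\<Sum>j\<in>S. c j * A u j))"
      by (simp add: sum_distrib_left sum.swap[of _ S] mult.left_commute)
    also have "\<dots> = 0" using h by simp
    finally show "(\<Sum>j\<in>S. c j * A l j) = 0" .
  qed
  thus "\<forall>j\<in>S. c j = 0" using S(3) unfolding cols_indep_def by (rule_tac mp[OF spec[of _ c]])
qed

lemma surj_U: assumes u: "u \<in> U" shows "\<exists>y. \<forall>u'\<in>U. (\<Sum>k\<in>S. A u' k * y k) = (if u' = u then 1 else 0)"
proof (rule ccontr)
  assume nex: "\<not> ?thesis"
  have rS: "r \<notin> S" using S(1) by auto
  define v where "v k = (if k = r then (\<lambda>u'. if u' = u then 1 else 0) else (\<lambda>u'. A u' k))" for k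
  have ind: "\<forall>c. (\<forall>x\<in>U. (\<Sum>i\<in>insert r S. c i * v i x) = 0) \<longrightarrow> (\<forall>i\<in>insert r S. c i = 0)"
  proof (intro allI impI)
    fix c assume h: "\<forall>x\<in>U. (\<Sum>i\<in>insert r S. c i * v i x) = 0"
    have vS: "\<forall>x. (\<Sum>i\<in>S. c i * v i x) = (\<Sum>i\<in>S. c i * A x i)"
      using rS by (auto intro!: sum.cong simp: v_def)
    have h2: "\<forall>x\<in>U. c r * (if x = u then 1 else 0) + (\<Sum>k\<in>S. c k * A x k) = 0"
      using h rS finS vS by (simp add: v_def)
    have cr: "c r = 0"
    proof (rule ccontr)
      assume "c r \<noteq> 0"
      have "\<forall>u'\<in>U. (\<Sum>k\<in>S. A u' k * (- c k / c r)) = (if u' = u then 1 else 0)"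
      proof
        fix x assume "x \<in> U"
        have "c r * (if x = u then 1 else 0) + (\<Sum>k\<in>S. c k * A x k) = 0" using h2 \<open>x \<in> U\<close> by blast
        hence e: "(\<Sum>k\<in>S. c k * A x k) = - (c r * (if x = u then 1 else 0))" by linarith
        have "(\<Sum>k\<in>S. A x k * (- c k / c r)) = - (\<Sum>k\<in>S. c k * A x k) / c r"
          by (simp add: sum_divide_distrib sum_negf mult.commute)
        also have "\<dots> = (if x = u then 1 else 0)" using e \<open>c r \<noteq> 0\<close> by simp
        finally show "(\<Sum>k\<in>S. A x k * (- c k / c r)) = (if x = u then 1 else 0)" .
      qed
      thus False using nex by (rule_tac notE[OF nex], rule_tac exI)
    qed
    hence "\<forall>x\<in>U. (\<Sum>k\<in>S. c k * A x k) = 0" using h2 by auto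
    hence "\<forall>k\<in>S. c k = 0" using inj_S by (rule_tac mp[OF spec[OF inj_S, of c]])
    with cr show "\<forall>k\<in>insert r S. c k = 0" by simp
  qed
  have sp: "\<forall>i\<in>insert r S. \<exists>\<beta>. \<forall>x\<in>U. v i x = (\<Sum>k\<in>U. \<beta> k * (\<lambda>k x. if x = k then 1 else 0) k x)"
  proof
    fix i assume "i \<in> insert r S"
    show "\<exists>\<beta>. \<forall>x\<in>U. v i x = (\<Sum>k\<in>U. \<beta> k * (\<lambda>k x. if x = k then 1 else 0) k x)"
    proof (rule exI[of _ "v i"], intro ballI)
      fix x assume "x \<in> U"
      have "(\<Sum>k\<in>U. v i k * (\<lambda>k x. if x = k then 1 else 0) k x) = (\<Sum>k\<in>U. if k = x then v i k else 0)"
        by (rule sum.cong) auto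
      also have "\<dots> = v i x" using \<open>x \<in> U\<close> finU by simp
      finally show "v i x = (\<Sum>k\<in>U. v i k * (\<lambda>k x. if x = k then 1 else 0) k x)" by simp
    qed
  qed
  have "card (insert r S) \<le> card U"
    by (rule fam_bound[OF _ finU ind sp]) (simp add: finS)
  thus False using rS finS U(2) S(2) by simp
qed


definition invP :: "rmat \<Rightarrow> bool" where
  "invP C \<longleftrightarrow> (\<forall>u\<in>U. \<forall>u'\<in>U. (\<Sum>j\<in>S. A u j * C j u') = (if u = u' then 1 else 0)) \<and>
     (\<forall>j\<in>S. \<forall>j'\<in>S. (\<Sum>u\<in>U. C j u * A u j') = (if j = j' then 1 else 0)) \<and>
     (\<forall>j u. j \<notin> S \<or> u \<notin> U \<longrightarrow> C j u = 0)"

lemma inv_exists: "\<exists>C. invP C"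
proof -
  have "\<forall>u. \<exists>y. u \<in> U \<longrightarrow> (\<forall>u'\<in>U. (\<Sum>k\<in>S. A u' k * y k) = (if u' = u then 1 else 0))"
    using surj_U by blast
  from choice[OF this] obtain Y where
    Y: "\<forall>u\<in>U. \<forall>u'\<in>U. (\<Sum>k\<in>S. A u' k * Y u k) = (if u' = u then 1 else 0)" by blast
  define C where "C j u = (if j \<in> S \<and> u \<in> U then Y u j else 0)" for j u
  have P1: "\<forall>u\<in>U. \<forall>u'\<in>U. (\<Sum>j\<in>S. A u j * C j u') = (if u = u' then 1 else 0)"
  proof (intro ballI)
    fix u u' assume "u \<in> U" "u' \<in> U"
    have "(\<Sum>j\<in>S. A u j * C j u') = (\<Sum>j\<in>S. A u j * Y u' j)"
      using \<open>u' \<in> U\<close> by (intro sum.cong) (auto simp: C_def)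
    also have "\<dots> = (if u = u' then 1 else 0)" using Y \<open>u \<in> U\<close> \<open>u' \<in> U\<close> by blast
    finally show "(\<Sum>j\<in>S. A u j * C j u') = (if u = u' then 1 else 0)" .
  qed
  have P2: "\<forall>j\<in>S. \<forall>j'\<in>S. (\<Sum>u\<in>U. C j u * A u j') = (if j = j' then 1 else 0)"
  proof (intro ballI)
    fix j0 j' assume j0: "j0 \<in> S" and j': "j' \<in> S"
    define c where "c j = (\<Sum>u\<in>U. C j u * A u j') - (if j = j' then 1 else 0)" for j
    have "\<forall>u0\<in>U. (\<Sum>j\<in>S. c j * A u0 j) = 0"
    proof
      fix u0 assume u0: "u0 \<in> U"
      have "(\<Sum>j\<in>S. c j * A u0 j) = (\<Sum>j\<in>S. (\<Sum>u\<in>U. C j u * A u j') * A u0 j) - (\<Sum>j\<in>S. (if j = j' then A u0 j else 0))"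
        by (simp add: c_def left_diff_distrib sum_subtractf if_distrib[of "\<lambda>x. x * _"] cong: if_cong)
      also have "(\<Sum>j\<in>S. (if j = j' then A u0 j else 0)) = A u0 j'" using j' finS by simp
      also have "(\<Sum>j\<in>S. (\<Sum>u\<in>U. C j u * A u j') * A u0 j) = (\<Sum>u\<in>U. (\<Sum>j\<in>S. A u0 j * C j u) * A u j')"
        by (simp add: sum_distrib_left sum_distrib_right sum.swap[of _ S] mult.commute mult.left_commute)
      also have "\<dots> = (\<Sum>u\<in>U. (if u = u0 then A u j' else 0))"
        using P1 u0 by (intro sum.cong) auto
      also have "\<dots> = A u0 j'" using u0 finU by simp
      finally show "(\<Sum>j\<in>S. c j * A u0 j) = 0" by simp
    qed
    hence "\<forall>j\<in>S. c j = 0" by (rule mp[OF spec[OF inj_S, of c]])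
    thus "(\<Sum>u\<in>U. C j0 u * A u j') = (if j0 = j' then 1 else 0)" using j0 by (simp add: c_def)
  qed
  have P3: "\<forall>j u. j \<notin> S \<or> u \<notin> U \<longrightarrow> C j u = 0" by (auto simp: C_def)
  show ?thesis using P1 P2 P3 unfolding invP_def by blast
qed

lemma inv_unique: assumes "invP C" "invP C'" shows "C' = C"
proof (intro ext)
  fix j u
  show "C' j u = C j u"
  proof (cases "j \<in> S \<and> u \<in> U")
    case False thus ?thesis using assms unfolding invP_def by auto
  next
    case True
    have P1: "\<forall>u\<in>U. \<forall>u'\<in>U. (\<Sum>j\<in>S. A u j * C j u') = (if u = u' then 1 else 0)"
      using assms(1) unfolding invP_def by blast
    have P2: "\<forall>j\<in>S. \<forall>j'\<in>S. (\<Sum>u\<in>U. C' j u * A u j') = (if j = j' then 1 else 0)"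
      using assms(2) unfolding invP_def by blast
    have "C' j u = (\<Sum>u''\<in>U. (if u'' = u then C' j u'' else 0))" using True finU by simp
    also have "\<dots> = (\<Sum>u''\<in>U. C' j u'' * (\<Sum>k\<in>S. A u'' k * C k u))"
      using P1 True by (intro sum.cong) auto
    also have "\<dots> = (\<Sum>k\<in>S. (\<Sum>u''\<in>U. C' j u'' * A u'' k) * C k u)"
      by (simp add: sum_distrib_left sum_distrib_right sum.swap[of _ U] mult.assoc)
    also have "\<dots> = (\<Sum>k\<in>S. (if k = j then C k u else 0))"
      using P2 True by (intro sum.cong) auto
    also have "\<dots> = C j u" using True finS by simp
    finally show ?thesis .
  qed
qed

lemma B_inv: "invP (ensemble_B A U S)"
proof -
  obtain C where C: "invP C" using inv_exists by blast
  have "ensemble_B A U S = C"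
    unfolding ensemble_B_def sub_inverse_def
    by (rule the_equality) (use C inv_unique in \<open>auto simp: invP_def\<close>)
  thus ?thesis using C by simp
qed

lemma final:
  fixes M W :: rmat
  assumes Mrep: "\<forall>l<m. M l i = (\<Sum>j<r. A l j * W j i)" and l: "l < m"
  shows "(\<Sum>j<r. A l j * (\<Sum>u\<in>U. ensemble_B A U S j u * M u i)) = M l i"
proof -
  obtain \<alpha> where al: "\<forall>j<r. \<forall>l<m. A l j = (\<Sum>k\<in>S. \<alpha> j k * A l k)" using col_span_all by blast
  define y where "y k = (\<Sum>j<r. \<alpha> j k * W j i)" for k
  have My: "\<forall>l<m. M l i = (\<Sum>k\<in>S. A l k * y k)"
  proof (intro allI impI)
    fix l assume "l < m"
    have "M l i = (\<Sum>j<r. (\<Sum>k\<in>S. \<alpha> j k * A l k) * W j i)"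
      using Mrep al \<open>l < m\<close> by simp
    also have "\<dots> = (\<Sum>k\<in>S. A l k * y k)"
      by (simp add: y_def sum_distrib_left sum_distrib_right sum.swap[of _ S] mult.commute mult.left_commute)
    finally show "M l i = (\<Sum>k\<in>S. A l k * y k)" .
  qed
  let ?B = "ensemble_B A U S"
  have P2: "\<forall>j\<in>S. \<forall>j'\<in>S. (\<Sum>u\<in>U. ?B j u * A u j') = (if j = j' then 1 else 0)"
    and P3: "\<forall>j u. j \<notin> S \<or> u \<notin> U \<longrightarrow> ?B j u = 0"
    using B_inv unfolding invP_def by blast+
  have inner: "(\<Sum>u\<in>U. ?B j u * M u i) = (if j \<in> S then y j else 0)" for j
  proof (cases "j \<in> S")
    case False thus ?thesis using P3 by simp
  next
    case True
    have "(\<Sum>u\<in>U. ?B j u * M u i) = (\<Sum>u\<in>U. ?B j u * (\<Sum>k\<in>S. A u k * y k))"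
      using My U(1) by (intro sum.cong) auto
    also have "\<dots> = (\<Sum>k\<in>S. (\<Sum>u\<in>U. ?B j u * A u k) * y k)"
      by (simp add: sum_distrib_left sum_distrib_right sum.swap[of _ U] mult.assoc)
    also have "\<dots> = (\<Sum>k\<in>S. (if k = j then y k else 0))"
      using P2 True by (intro sum.cong) auto
    also have "\<dots> = y j" using True finS by simp
    finally show ?thesis using True by simp
  qed
  have "(\<Sum>j<r. A l j * (\<Sum>u\<in>U. ?B j u * M u i)) = (\<Sum>j<r. (if j \<in> S then A l j * y j else 0))"
    by (intro sum.cong) (auto simp: inner)
  also have "\<dots> = (\<Sum>j\<in>{..<r} \<inter> S. A l j * y j)" by (simp add: sum.inter_restrict)
  also have "{..<r} \<inter> S = S" using S(1) by auto
  finally show ?thesis using My l by simp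
qed

end

theorem mainTheorem7:
  fixes M A W :: rmat and m n r s :: nat and U :: "nat set"
  assumes "nonneg_mat M m n"
    and "nonneg_mat A m r"
    and "nonneg_mat W r n"
    and "\<forall>l<m. \<forall>i<n. M l i = mat_mult A r W l i"
    and "stable_fact M A W m n r"
    and "s = mat_rank A m r"
    and "U \<subseteq> {..<m}" and "card U = s" and "rows_indep A r U"
  shows "\<forall>S \<in> ensemble_sets A m r s. \<forall>i<n. \<forall>l<m.
           (\<Sum>j<r. A l j * (\<Sum>u\<in>U. ensemble_B A U S j u * M u i)) = M l i"
proof (intro ballI allI impI)
  fix S i l assume S: "S \<in> ensemble_sets A m r s" and i: "i < n" and l: "l < m"
  have Mrep: "\<forall>l<m. M l i = (\<Sum>j<r. A l j * W j i)"
    using assms(4) i by (simp add: mat_mult_def)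
  show "(\<Sum>j<r. A l j * (\<Sum>u\<in>U. ensemble_B A U S j u * M u i)) = M l i"
  proof -
    have "S \<subseteq> {..<r}" "card S = s" "cols_indep A m S" using S unfolding ensemble_sets_def by auto
    from final[where A=A and m=m and r=r and s=s and U=U and S=S and M=M and i=i and W=W and l=l, OF assms(6,7,8,9) this Mrep l] show ?thesis .
  qed
qed

end
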